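(* Every double extended meta-interpreter $D$ is sound: for every definite program $P$, every atomic query $Q_0\in B^E_P$ and all terms $s_1,\dots,s_{n}$, if $\mathit{solve}(t_0,t_1,\dots,t_{n})$ is a computed answer for $\mathit{solve}(Q_0,s_1,\dots,s_{n})$ with respect to $D\cup\mathit{ce}^D(P)$, then $t_0$ is a correct answer for $Q_0$ with respect to $P$.
   Context: Logic programs are definite; $B^E_P$ is the set of atoms of the language of $P$ modulo variance; computed answers are w.r.t. SLD-resolution with the leftmost selection rule. A double extended meta-interpreter is a definite program consisting of three clauses of the form $\mathit{solve}(\mathit{true},t_{11},\dots,t_{1n})\leftarrow C_{11},\dots,C_{1m_1}.$ $\mathit{solve}((A,B),t_{21},\dots,t_{2n})\leftarrow D_{11},\dots,D_{1k_1},\mathit{solve}(A,t_{31},\dots,t_{3n}),D_{21},\dots,D_{2k_2},\mathit{solve}(B,t_{41},\dots,t_{4n}),C_{21},\dots,C_{2m_2}.$ $\mathit{solve}(A,t_{51},\dots,t_{5n})\leftarrow D_{31},\dots,D_{3k_3},\mathit{clause}(A,B,s_1,\dots,s_k),D_{41},\dots,D_{4k_4},\mathit{solve}(B,t_{61},\dots,t_{6n}),C_{31},\dots,C_{3m_3}.$ where $A,B$ are variables (the meta-variables), the $t_{ij},s_j$ are terms, together with clauses defining the other predicates occurring in the atoms $C_{kl},D_{pq}$, none of which contain $\mathit{solve}$ or $\mathit{clause}$. For a definite program $P$, a clause body $B_1,\dots,B_m$ is encoded as the term $(B_1,(B_2,\dots,B_m))$ using the binary functor $,/2$ and an empty body as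 $\mathit{true}$; $\mathit{ce}^D(P)$ is a set of facts $\mathit{clause}(H,B,s_1,\dots,s_k)$ such that for every clause $H\leftarrow B$ of $P$ there is a unique fact of the form $\mathit{clause}(H,B,\dots)$ in $\mathit{ce}^D(P)$ and every fact $\mathit{clause}(H,B,\dots)$ in $\mathit{ce}^D(P)$ comes from a clause $H\leftarrow B$ of $P$. The symbols $,/2$, $\mathit{clause}$, $\mathit{solve}$ do not occur in the language of $P$. *)

theory Defs
  imports Main
begin

datatype ('f, 'v) trm = Var 'v | Fun 'f "('f, 'v) trm list"

text \<open>Symbols: the reserved meta-level symbols solve, clause, the binary
  conjunction functor (comma) and true, plus user symbols.\<close>
datatype 'f sym = Solve | Clause | Comma | TrueS | Usr 'f

type_synonym ('f, 'v) subst = "'v \<Rightarrow> ('f, 'v) trm"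
type_synonym ('f, 'v) clause = "('f, 'v) trm \<times> ('f, 'v) trm list"

fun subst :: "('f, 'v) subst \<Rightarrow> ('f, 'v) trm \<Rightarrow> ('f, 'v) trm" where
  "subst \<sigma> (Var x) = \<sigma> x"
| "subst \<sigma> (Fun f ts) = Fun f (map (subst \<sigma>) ts)"

definition subst_comp :: "('f, 'v) subst \<Rightarrow> ('f, 'v) subst \<Rightarrow> ('f, 'v) subst" where
  "subst_comp \<sigma> \<tau> = (\<lambda>x. subst \<tau> (\<sigma> x))"

fun vars :: "('f, 'v) trm \<Rightarrow> 'v set" where
  "vars (Var x) = {x}"
| "vars (Fun f ts) = (\<Union>t\<in>set ts. vars t)"

fun funs :: "('f, 'v) trm \<Rightarrow> ('f \<times> nat) set" where
  "funs (Var x) = {}"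
| "funs (Fun f ts) = insert (f, length ts) (\<Union>t\<in>set ts. funs t)"

fun syms :: "('f, 'v) trm \<Rightarrow> 'f set" where
  "syms (Var x) = {}"
| "syms (Fun f ts) = insert f (\<Union>t\<in>set ts. syms t)"

definition is_atom :: "('f, 'v) trm \<Rightarrow> bool" where
  "is_atom a \<longleftrightarrow> (\<exists>p ts. a = Fun p ts)"

definition clause_vars :: "('f, 'v) clause \<Rightarrow> 'v set" where
  "clause_vars c = vars (fst c) \<union> (\<Union>b\<in>set (snd c). vars b)"

definition clause_atoms :: "('f, 'v) clause \<Rightarrow> ('f, 'v) trm set" where
  "clause_atoms c = insert (fst c) (set (snd c))"

definition subst_clause :: "('f, 'v) subst \<Rightarrow> ('f, 'v) clause \<Rightarrow> ('f, 'v) clause" where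
  "subst_clause \<sigma> c = (subst \<sigma> (fst c), map (subst \<sigma>) (snd c))"

definition variant :: "('f, 'v) clause \<Rightarrow> ('f, 'v) clause \<Rightarrow> bool" where
  "variant c c' \<longleftrightarrow> (\<exists>\<pi>. bij \<pi> \<and> c' = subst_clause (Var \<circ> \<pi>) c)"

definition is_mgu :: "('f, 'v) subst \<Rightarrow> ('f, 'v) trm \<Rightarrow> ('f, 'v) trm \<Rightarrow> bool" where
  "is_mgu \<sigma> s t \<longleftrightarrow> subst \<sigma> s = subst \<sigma> t \<and>
     (\<forall>\<tau>. subst \<tau> s = subst \<tau> t \<longrightarrow> (\<exists>\<rho>. \<tau> = subst_comp \<sigma> \<rho>))"

text \<open>sld_refutation Prg U G \<theta>: there is a successful SLD-derivation of the goal G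
  (list of atoms) w.r.t. program Prg, via the leftmost selection rule, whose
  composed mgu is \<theta>; U is the set of variables already used (initial query,
  previously used clause variants and the variables introduced by the mgus),
  from which each new clause variant must be standardized apart.\<close>
inductive sld_refutation ::
  "('f, 'v) clause set \<Rightarrow> 'v set \<Rightarrow> ('f, 'v) trm list \<Rightarrow> ('f, 'v) subst \<Rightarrow> bool"
  for Prg where
  empty: "sld_refutation Prg U [] Var"
| step: "\<lbrakk> c \<in> Prg; variant c (H, Bs); clause_vars (H, Bs) \<inter> U = {};
          is_mgu \<sigma> A H;
          sld_refutation Prg
             (U \<union> clause_vars (H, Bs) \<union> (\<Union>x\<in>U \<union> clause_vars (H, Bs). vars (\<sigma> x)))
             (map (subst \<sigma>) (Bs @ G)) \<theta> \<rbrakk>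
        \<Longrightarrow> sld_refutation Prg U (A # G) (subst_comp \<sigma> \<theta>)"

definition computed_answer :: "('f, 'v) clause set \<Rightarrow> ('f, 'v) trm \<Rightarrow> ('f, 'v) trm \<Rightarrow> bool" where
  "computed_answer Prg Q A \<longleftrightarrow> (\<exists>\<theta>. sld_refutation Prg (vars Q) [Q] \<theta> \<and> A = subst \<theta> Q)"

fun eval :: "('f \<Rightarrow> 'd list \<Rightarrow> 'd) \<Rightarrow> ('v \<Rightarrow> 'd) \<Rightarrow> ('f, 'v) trm \<Rightarrow> 'd" where
  "eval F \<alpha> (Var x) = \<alpha> x"
| "eval F \<alpha> (Fun f ts) = F f (map (eval F \<alpha>) ts)"

fun holds :: "('f \<Rightarrow> 'd list \<Rightarrow> 'd) \<Rightarrow> ('f \<Rightarrow> 'd list \<Rightarrow> bool) \<Rightarrow> ('v \<Rightarrow> 'd)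
               \<Rightarrow> ('f, 'v) trm \<Rightarrow> bool" where
  "holds F R \<alpha> (Var x) = False"
| "holds F R \<alpha> (Fun p ts) = R p (map (eval F \<alpha>) ts)"

definition is_model :: "('f \<Rightarrow> 'd list \<Rightarrow> 'd) \<Rightarrow> ('f \<Rightarrow> 'd list \<Rightarrow> bool)
                          \<Rightarrow> ('f, 'v) clause set \<Rightarrow> bool" where
  "is_model F R Prg \<longleftrightarrow>
     (\<forall>c\<in>Prg. \<forall>\<alpha>. (\<forall>b\<in>set (snd c). holds F R \<alpha> b) \<longrightarrow> holds F R \<alpha> (fst c))"

text \<open>Prg \<Turnstile> \<forall>A, over all interpretations with domain 'd; the theorem below
  is stated for an arbitrary type 'd, i.e. for all domains.\<close>
definition entails :: "'d itself \<Rightarrow> ('f, 'v) clause set \<Rightarrow> ('f, 'v) trm \<Rightarrow> bool" where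
  "entails _ Prg A \<longleftrightarrow>
     (\<forall>(F :: 'f \<Rightarrow> 'd list \<Rightarrow> 'd) R. is_model F R Prg \<longrightarrow> (\<forall>\<alpha>. holds F R \<alpha> A))"

definition correct_answer :: "'d itself \<Rightarrow> ('f, 'v) clause set \<Rightarrow> ('f, 'v) trm \<Rightarrow> ('f, 'v) trm \<Rightarrow> bool" where
  "correct_answer d Prg Q A \<longleftrightarrow> (\<exists>\<theta>. A = subst \<theta> Q) \<and> entails d Prg A"

definition pred_syms :: "('f, 'v) clause set \<Rightarrow> ('f \<times> nat) set" where
  "pred_syms Prg = {(p, length ts) | p ts. \<exists>c\<in>Prg. Fun p ts \<in> clause_atoms c}"

definition fun_syms :: "('f, 'v) clause set \<Rightarrow> ('f \<times> nat) set" where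
  "fun_syms Prg = {fa. \<exists>c\<in>Prg. \<exists>p ts. Fun p ts \<in> clause_atoms c \<and> (\<exists>t\<in>set ts. fa \<in> funs t)}"

definition user_sym :: "'f sym \<Rightarrow> bool" where
  "user_sym s \<longleftrightarrow> (\<exists>f. s = Usr f)"

definition definite_program :: "('f sym, 'v) clause set \<Rightarrow> bool" where
  "definite_program P \<longleftrightarrow> finite P \<and>
     (\<forall>c\<in>P. \<forall>a\<in>clause_atoms c. is_atom a \<and> (\<forall>s\<in>syms a. user_sym s))"

definition ext_base :: "('f, 'v) clause set \<Rightarrow> ('f, 'v) trm set" where
  "ext_base Prg = {Fun p ts | p ts. (p, length ts) \<in> pred_syms Prg \<and>
                      (\<forall>t\<in>set ts. funs t \<subseteq> fun_syms Prg)}"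

fun enc_body :: "('f sym, 'v) trm list \<Rightarrow> ('f sym, 'v) trm" where
  "enc_body [] = Fun TrueS []"
| "enc_body [b] = b"
| "enc_body (b # bs) = Fun Comma [b, enc_body bs]"

definition is_ce :: "nat \<Rightarrow> ('f sym, 'v) clause set \<Rightarrow> ('f sym, 'v) clause set \<Rightarrow> bool" where
  "is_ce k P CE \<longleftrightarrow>
     (\<forall>c\<in>CE. \<exists>H Bs ss. c = (Fun Clause (H # enc_body Bs # ss), []) \<and> (H, Bs) \<in> P
                         \<and> length ss = k) \<and>
     (\<forall>c\<in>P. \<exists>!f\<in>CE. \<exists>ss. f = (Fun Clause (fst c # enc_body (snd c) # ss), []))"

definition no_meta :: "('f sym, 'v) trm \<Rightarrow> bool" where
  "no_meta a \<longleftrightarrow> Solve \<notin> syms a \<and> Clause \<notin> syms a"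

definition double_ext_mi :: "nat \<Rightarrow> nat \<Rightarrow> ('f sym, 'v) clause set \<Rightarrow> bool" where
  "double_ext_mi n k D \<longleftrightarrow>
    (\<exists>A B t1 t2 t3 t4 t5 t6 s C1 C2 C3 D1 D2 D3 D4 Aux.
       A \<noteq> B \<and>
       length t1 = n \<and> length t2 = n \<and> length t3 = n \<and>
       length t4 = n \<and> length t5 = n \<and> length t6 = n \<and> length s = k \<and>
       (\<forall>a\<in>set (C1 @ C2 @ C3 @ D1 @ D2 @ D3 @ D4). is_atom a \<and> no_meta a) \<and>
       finite Aux \<and>
       (\<forall>c\<in>Aux. \<forall>a\<in>clause_atoms c. is_atom a \<and> no_meta a) \<and>
       D = {(Fun Solve (Fun TrueS [] # t1), C1),
            (Fun Solve (Fun Comma [Var A, Var B] # t2),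
               D1 @ [Fun Solve (Var A # t3)] @ D2 @ [Fun Solve (Var B # t4)] @ C2),
            (Fun Solve (Var A # t5),
               D3 @ [Fun Clause (Var A # Var B # s)] @ D4 @ [Fun Solve (Var B # t6)] @ C3)}
           \<union> Aux)"

end

theory Submission
  imports Defs
begin

fun sem :: "('f sym \<Rightarrow> 'd list \<Rightarrow> 'd) \<Rightarrow> ('f sym \<Rightarrow> 'd list \<Rightarrow> bool) \<Rightarrow> ('v \<Rightarrow> 'd)
             \<Rightarrow> ('f sym, 'v) trm \<Rightarrow> bool" where
  "sem F R \<alpha> (Fun TrueS []) = True"
| "sem F R \<alpha> (Fun Comma [a, b]) = (sem F R \<alpha> a \<and> sem F R \<alpha> b)"
| "sem F R \<alpha> t = holds F R \<alpha> t"

definition good :: "'d itself \<Rightarrow> ('f sym, 'v) clause set \<Rightarrow> ('f sym, 'v) trm \<Rightarrow> bool" where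
  "good d P a \<longleftrightarrow>
    (\<forall>X rest. a = Fun Solve (X # rest) \<longrightarrow>
       (\<forall>(F :: 'f sym \<Rightarrow> 'd list \<Rightarrow> 'd) R. is_model F R P \<longrightarrow> (\<forall>\<alpha>. sem F R \<alpha> X))) \<and>
    (\<forall>H B rest. a = Fun Clause (H # B # rest) \<longrightarrow>
       (\<forall>(F :: 'f sym \<Rightarrow> 'd list \<Rightarrow> 'd) R. is_model F R P \<longrightarrow>
          (\<forall>\<alpha>. sem F R \<alpha> B \<longrightarrow> sem F R \<alpha> H)))"

lemma subst_subst: "subst \<tau> (subst \<sigma> t) = subst (subst_comp \<sigma> \<tau>) t"
  by (induction t) (auto simp: subst_comp_def)

lemma subst_comp_assoc: "subst_comp (subst_comp a b) c = subst_comp a (subst_comp b c)"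
  by (simp add: subst_comp_def subst_subst)

lemma eval_subst: "eval F \<alpha> (subst \<sigma> t) = eval F (\<lambda>x. eval F \<alpha> (\<sigma> x)) t"
proof (induction t)
  case (Var x)
  then show ?case by simp
next
  case (Fun f ts)
  then have "map (eval F \<alpha> \<circ> subst \<sigma>) ts = map (eval F (\<lambda>x. eval F \<alpha> (\<sigma> x))) ts"
    by (simp add: map_eq_conv)
  then show ?case by (simp only: eval.simps subst.simps map_map)
qed

lemma sem_user: "a = Fun (Usr p) ts \<Longrightarrow>
   sem F R \<alpha> (subst \<sigma> a) = holds F R (\<lambda>x. eval F \<alpha> (\<sigma> x)) a"
  by (simp add: eval_subst comp_def)

lemma sem_enc: "(\<forall>b\<in>set Bs. \<exists>p ts. b = Fun (Usr p) ts) \<Longrightarrow>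
   sem F R \<alpha> (subst \<sigma> (enc_body Bs)) = (\<forall>b\<in>set Bs. holds F R (\<lambda>x. eval F \<alpha> (\<sigma> x)) b)"
proof (induction Bs rule: enc_body.induct)
  case 1
  then show ?case by simp
next
  case (2 b)
  then obtain p ts where "b = Fun (Usr p) ts" by auto
  then show ?case using sem_user[of b p ts F R \<alpha> \<sigma>] by simp
next
  case (3 b v va)
  then obtain p ts where bu: "b = Fun (Usr p) ts" by auto
  have "sem F R \<alpha> (subst \<sigma> (enc_body (b # v # va))) =
        (sem F R \<alpha> (subst \<sigma> b) \<and> sem F R \<alpha> (subst \<sigma> (enc_body (v # va))))" by simp
  also have "\<dots> = (holds F R (\<lambda>x. eval F \<alpha> (\<sigma> x)) b \<and> (\<forall>b\<in>set (v # va). holds F R (\<lambda>x. eval F \<alpha> (\<sigma> x)) b))"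
    using 3 by (simp add: sem_user[OF bu])
  finally show ?case by simp
qed

lemma inv:
  assumes "sld_refutation Prg U G \<theta>"
    and "\<And>c \<tau>. c \<in> Prg \<Longrightarrow> (\<forall>b\<in>set (snd c). good d P (subst \<tau> b)) \<Longrightarrow> good d P (subst \<tau> (fst c))"
  shows "\<forall>a\<in>set G. good d P (subst \<theta> a)"
  using assms(1)
proof (induction rule: sld_refutation.induct)
  case (empty U)
  then show ?case by simp
next
  case (step c H Bs U \<sigma> A G \<theta>)
  from step.hyps(2) obtain \<pi> where hb: "(H, Bs) = subst_clause (Var \<circ> \<pi>) c"
    unfolding variant_def by blast
  have H: "H = subst (Var \<circ> \<pi>) (fst c)" and Bs: "Bs = map (subst (Var \<circ> \<pi>)) (snd c)"
    using hb by (auto simp: subst_clause_def)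
  have "good d P (subst (subst_comp \<sigma> \<theta>) A)"
  proof -
    have "subst \<sigma> A = subst \<sigma> H" using step.hyps(4) by (simp add: is_mgu_def)
    then have "subst (subst_comp \<sigma> \<theta>) A = subst \<theta> (subst \<sigma> H)"
      by (metis subst_subst)
    also have "\<dots> = subst (subst_comp (Var \<circ> \<pi>) (subst_comp \<sigma> \<theta>)) (fst c)"
      by (simp add: H subst_subst subst_comp_assoc)
    finally have e: "subst (subst_comp \<sigma> \<theta>) A = subst (subst_comp (Var \<circ> \<pi>) (subst_comp \<sigma> \<theta>)) (fst c)" .
    have "\<forall>b\<in>set (snd c). good d P (subst (subst_comp (Var \<circ> \<pi>) (subst_comp \<sigma> \<theta>)) b)"
    proof
      fix b assume "b \<in> set (snd c)"
      then have "subst (subst_comp (Var \<circ> \<pi>) \<sigma>) b \<in> set (map (subst \<sigma>) (Bs @ G))"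
        by (simp add: Bs subst_subst)
      then have "good d P (subst \<theta> (subst (subst_comp (Var \<circ> \<pi>) \<sigma>) b))"
        using step.IH by blast
      then show "good d P (subst (subst_comp (Var \<circ> \<pi>) (subst_comp \<sigma> \<theta>)) b)"
        by (simp only: subst_subst subst_comp_assoc)
    qed
    then show ?thesis using assms(2)[OF step.hyps(1)] e by metis
  qed
  moreover have "\<forall>a\<in>set G. good d P (subst (subst_comp \<sigma> \<theta>) a)"
    using step.IH by (auto simp flip: subst_subst)
  ultimately show ?case by simp
qed

theorem mainTheorem5:
  fixes D P CE :: "('f sym, 'v) clause set"
    and Q0 t0 :: "('f sym, 'v) trm"
    and ss ts :: "('f sym, 'v) trm list"
  assumes "double_ext_mi n k D"
    and "definite_program P"
    and "is_ce k P CE"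
    and "Q0 \<in> ext_base P"
    and "length ss = n"
    and "computed_answer (D \<union> CE) (Fun Solve (Q0 # ss)) (Fun Solve (t0 # ts))"
  shows "correct_answer TYPE('d) P Q0 t0"
proof -
  have userP: "\<And>c a. c \<in> P \<Longrightarrow> a \<in> clause_atoms c \<Longrightarrow> \<exists>p ts. a = Fun (Usr p) ts"
  proof -
    fix c a assume "c \<in> P" "a \<in> clause_atoms c"
    then have "is_atom a" "\<forall>s\<in>syms a. user_sym s" using assms(2) by (auto simp: definite_program_def)
    then show "\<exists>p ts. a = Fun (Usr p) ts" by (auto simp: is_atom_def user_sym_def)
  qed
  have cl: "\<And>c \<tau>. c \<in> D \<union> CE \<Longrightarrow> (\<forall>b\<in>set (snd c). good TYPE('d) P (subst \<tau> b))
           \<Longrightarrow> good TYPE('d) P (subst \<tau> (fst c))"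
  proof -
    fix c \<tau> assume c: "c \<in> D \<union> CE" and body: "\<forall>b\<in>set (snd c). good TYPE('d) P (subst \<tau> b)"
    show "good TYPE('d) P (subst \<tau> (fst c))"
    proof (cases "c \<in> CE")
      case True
      then obtain H Bs ss' where cdef: "c = (Fun Clause (H # enc_body Bs # ss'), [])" and HB: "(H, Bs) \<in> P"
        using assms(3) unfolding is_ce_def by blast
      have Hu: "\<exists>p ts. H = Fun (Usr p) ts" using userP[OF HB] by (simp add: clause_atoms_def)
      have Bu: "\<forall>b\<in>set Bs. \<exists>p ts. b = Fun (Usr p) ts" using userP[OF HB] by (simp add: clause_atoms_def)
      show ?thesis unfolding good_def
      proof (intro conjI allI impI)
        fix X rest assume "subst \<tau> (fst c) = Fun Solve (X # rest)"
        then have False using cdef by simp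
        then show "sem F R \<alpha> X" for F :: "'f sym \<Rightarrow> 'd list \<Rightarrow> 'd" and R \<alpha> by simp
      next
        fix H' B rest F R \<alpha>
        assume e: "subst \<tau> (fst c) = Fun Clause (H' # B # rest)" and m: "is_model (F :: 'f sym \<Rightarrow> 'd list \<Rightarrow> 'd) R P"
          and s: "sem F R \<alpha> B"
        have H': "H' = subst \<tau> H" and B: "B = subst \<tau> (enc_body Bs)" using e cdef by auto
        have "\<forall>b\<in>set Bs. holds F R (\<lambda>x. eval F \<alpha> (\<tau> x)) b" using s B by (simp add: sem_enc[OF Bu])
        then have "holds F R (\<lambda>x. eval F \<alpha> (\<tau> x)) H" using m HB unfolding is_model_def by fastforce
        then show "sem F R \<alpha> H'" using H' Hu sem_user by metis
      qed
    next
      case False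
      then have cD: "c \<in> D" using c by blast
      obtain A B t1 t2 t3 t4 t5 t6 s C1 C2 C3 D1 D2 D3 D4 Aux where
        aux: "\<forall>c\<in>Aux. \<forall>a\<in>clause_atoms c. is_atom a \<and> no_meta a" and
        Ddef: "D = {(Fun Solve (Fun TrueS [] # t1), C1),
            (Fun Solve (Fun Comma [Var A, Var B] # t2),
               D1 @ [Fun Solve (Var A # t3)] @ D2 @ [Fun Solve (Var B # t4)] @ C2),
            (Fun Solve (Var A # t5),
               D3 @ [Fun Clause (Var A # Var B # s)] @ D4 @ [Fun Solve (Var B # t6)] @ C3)}
           \<union> Aux"
        using assms(1) unfolding double_ext_mi_def by blast
      consider "c \<in> Aux"
        | "c = (Fun Solve (Fun TrueS [] # t1), C1)"
        | "c = (Fun Solve (Fun Comma [Var A, Var B] # t2),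
               D1 @ [Fun Solve (Var A # t3)] @ D2 @ [Fun Solve (Var B # t4)] @ C2)"
        | "c = (Fun Solve (Var A # t5),
               D3 @ [Fun Clause (Var A # Var B # s)] @ D4 @ [Fun Solve (Var B # t6)] @ C3)"
        using cD Ddef by blast
      then show ?thesis
      proof cases
        case 1
        then have "is_atom (fst c)" "no_meta (fst c)" using aux by (auto simp: clause_atoms_def)
        then obtain p us where "fst c = Fun p us" "p \<noteq> Solve" "p \<noteq> Clause"
          by (auto simp: is_atom_def no_meta_def)
        then show ?thesis by (simp add: good_def)
      next
        case 2
        then show ?thesis by (simp add: good_def)
      next
        case 3
        have a: "good TYPE('d) P (subst \<tau> (Fun Solve (Var A # t3)))"
         and b: "good TYPE('d) P (subst \<tau> (Fun Solve (Var B # t4)))" using body 3 by auto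
        show ?thesis using a b 3 by (simp add: good_def)
      next
        case 4
        have a: "good TYPE('d) P (subst \<tau> (Fun Clause (Var A # Var B # s)))"
         and b: "good TYPE('d) P (subst \<tau> (Fun Solve (Var B # t6)))" using body 4 by auto
        show ?thesis using a b 4 by (simp add: good_def)
      qed
    qed
  qed
  obtain \<theta> where r: "sld_refutation (D \<union> CE) (vars (Fun Solve (Q0 # ss))) [Fun Solve (Q0 # ss)] \<theta>"
    and ans: "Fun Solve (t0 # ts) = subst \<theta> (Fun Solve (Q0 # ss))"
    using assms(6) unfolding computed_answer_def by blast
  have t0: "t0 = subst \<theta> Q0" using ans by simp
  have g: "good TYPE('d) P (subst \<theta> (Fun Solve (Q0 # ss)))" using inv[OF r cl] by simp
  have Qu: "\<exists>p us. Q0 = Fun (Usr p) us"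
  proof -
    obtain p us where "Q0 = Fun p us" "(p, length us) \<in> pred_syms P" using assms(4) by (auto simp: ext_base_def)
    moreover from this obtain c vs where "c \<in> P" "Fun p vs \<in> clause_atoms c" by (auto simp: pred_syms_def)
    ultimately show ?thesis using userP by fastforce
  qed
  have "entails TYPE('d) P t0"
    unfolding entails_def
  proof (intro allI impI)
    fix F :: "'f sym \<Rightarrow> 'd list \<Rightarrow> 'd" and R \<alpha> assume m: "is_model F R P"
    have "sem F R \<alpha> t0" using g m t0 by (simp add: good_def)
    then have "holds F R (\<lambda>x. eval F \<alpha> (\<theta> x)) Q0" using t0 Qu sem_user by metis
    then show "holds F R \<alpha> t0" using t0 Qu by (auto simp: eval_subst comp_def)
  qed
  then show ?thesis unfolding correct_answer_def using t0 by blast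
qed

end
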